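(* Let $C_S(\boldsymbol\lambda,\boldsymbol\sigma)=\frac12E\{\log_2(1+\gamma_S)\}$, where $\boldsymbol\lambda=(\lambda_1,\dots,\lambda_N)$ and $\boldsymbol\sigma=(\sigma_1,\dots,\sigma_N)$ are the decreasingly ordered eigenvalue vectors (entries in $(0,\infty)$) of $R_r$ and $R_t$. (i) For fixed $\boldsymbol\lambda$, if $\boldsymbol\sigma^{(1)}\succ\boldsymbol\sigma^{(2)}$ then $C_S(\boldsymbol\lambda,\boldsymbol\sigma^{(1)})\ge C_S(\boldsymbol\lambda,\boldsymbol\sigma^{(2)})$ (Schur-convexity in the transmit eigenvalues). (ii) For fixed $\boldsymbol\sigma$, if $\boldsymbol\lambda^{(1)}\succ\boldsymbol\lambda^{(2)}$ and the largest entries coincide, $\lambda^{(1)}_1=\lambda^{(2)}_1$, then $C_S(\boldsymbol\lambda^{(1)},\boldsymbol\sigma)\le C_S(\boldsymbol\lambda^{(2)},\boldsymbol\sigma)$.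
   Context: Fix an integer $N\ge 1$ and constants $\eta\in(0,1]$, $\theta\in(0,1)$, $\rho>0$, $d_1,d_2>0$, $\tau>0$. Let $g_1,\dots,g_N,q$ be i.i.d. zero-mean circularly symmetric complex Gaussian random variables of unit variance, $S=\sum_{i=1}^N\lambda_i|g_i|^2$, and $$\gamma_S=\frac{\frac{\eta\theta(1-\theta)\rho^2}{d_1^{2\tau}d_2^\tau}\,S\,\lambda_1|g_1|^2\,\sigma_1|q|^2}{\frac{\eta\theta\rho}{d_1^\tau d_2^\tau}\,S\,\sigma_1|q|^2+\frac{(1-\theta)\rho}{d_1^\tau}\lambda_1|g_1|^2+1},$$ where $\lambda_1\ge\dots\ge\lambda_N$ and $\sigma_1\ge\dots\ge\sigma_N$. Majorization: for $\mathbf a,\mathbf b\in\mathbb R^N$ with decreasingly sorted entries, $\mathbf a\succ\mathbf b$ means $\sum_{i=1}^k a_{[i]}\ge\sum_{i=1}^k b_{[i]}$ for $k=1,\dots,N-1$ and $\sum_{i=1}^N a_{[i]}=\sum_{i=1}^N b_{[i]}$. *)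

theory Defs
  imports "HOL-Probability.Probability"
begin

text \<open>Zero-mean circularly symmetric complex Gaussian of unit variance:
  real and imaginary parts independent N(0, 1/2).\<close>
definition cgauss :: "complex measure" where
  "cgauss = distr (density lborel (normal_density 0 (sqrt (1/2)))
                   \<Otimes>\<^sub>M density lborel (normal_density 0 (sqrt (1/2))))
                  borel (\<lambda>(x, y). Complex x y)"

text \<open>Joint law of (g_1,...,g_N) (indices 0..N-1) and q, all i.i.d. cgauss.\<close>
definition channel_space :: "nat \<Rightarrow> ((nat \<Rightarrow> complex) \<times> complex) measure" where
  "channel_space N = (PiM {..<N} (\<lambda>_. cgauss)) \<Otimes>\<^sub>M cgauss"

text \<open>The SNR gamma_S. Vectors lam, sig are lists with lam!0 = lambda_1, etc.\<close>
definition gammaS ::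
  "nat \<Rightarrow> real \<Rightarrow> real \<Rightarrow> real \<Rightarrow> real \<Rightarrow> real \<Rightarrow> real \<Rightarrow> real list \<Rightarrow> real list
    \<Rightarrow> (nat \<Rightarrow> complex) \<Rightarrow> complex \<Rightarrow> real" where
  "gammaS N \<eta> \<theta> \<rho> d1 d2 \<tau> lam sig g q =
     (let S = (\<Sum>i<N. lam ! i * (cmod (g i))\<^sup>2);
          a = lam ! 0 * (cmod (g 0))\<^sup>2;
          b = sig ! 0 * (cmod q)\<^sup>2
      in ((\<eta> * \<theta> * (1 - \<theta>) * \<rho>\<^sup>2 / (d1 powr (2 * \<tau>) * d2 powr \<tau>)) * S * a * b) /
         ((\<eta> * \<theta> * \<rho> / (d1 powr \<tau> * d2 powr \<tau>)) * S * b
          + ((1 - \<theta>) * \<rho> / d1 powr \<tau>) * a + 1))"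

definition CS ::
  "nat \<Rightarrow> real \<Rightarrow> real \<Rightarrow> real \<Rightarrow> real \<Rightarrow> real \<Rightarrow> real \<Rightarrow> real list \<Rightarrow> real list \<Rightarrow> real" where
  "CS N \<eta> \<theta> \<rho> d1 d2 \<tau> lam sig =
     (1/2) * (\<integral>w. log 2 (1 + gammaS N \<eta> \<theta> \<rho> d1 d2 \<tau> lam sig (fst w) (snd w))
                \<partial>channel_space N)"

definition eigvec :: "nat \<Rightarrow> real list \<Rightarrow> bool" where
  "eigvec N v \<longleftrightarrow> length v = N \<and> (\<forall>x\<in>set v. x > 0) \<and> sorted_wrt (\<ge>) v"

definition majorizes :: "real list \<Rightarrow> real list \<Rightarrow> bool" where
  "majorizes a b \<longleftrightarrow> length a = length b \<and>
     (\<forall>k\<in>{1..<length a}. sum_list (take k (rev (sort a))) \<ge> sum_list (take k (rev (sort b)))) \<and>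
     sum_list a = sum_list b"

end

theory Submission
  imports Defs
begin


lemma ps_D: "prob_space (density lborel (normal_density 0 (sqrt (1/2))))"
  by (rule prob_space_normal_density) simp

lemma meas_Complex[measurable]: "(\<lambda>(x, y). Complex x y) \<in> borel_measurable (borel \<Otimes>\<^sub>M borel)"
  unfolding Complex_eq
  by measurable

lemma ps_cgauss: "prob_space cgauss"
  unfolding cgauss_def
  apply (rule prob_space.prob_space_distr)
   apply (rule prob_space_pair; rule ps_D)
  by measurable

lemma int_D_sq: "integrable (density lborel (normal_density 0 (sqrt (1/2)))) (\<lambda>x. x^2)"
  apply (subst integrable_density)
  using integrable_normal_moment[of "sqrt (1/2)" 0 2]
  by (auto simp: normal_density_nonneg)

lemma sets_cgauss[measurable_cong, simp]: "sets cgauss = sets borel"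
  unfolding cgauss_def by simp

lemma int_cgauss_sq: "integrable cgauss (\<lambda>z. (cmod z)^2)"
proof -
  let ?D = "density lborel (normal_density 0 (sqrt (1/2)))"
  interpret pair_sigma_finite ?D ?D
    by (intro pair_sigma_finite.intro prob_space_imp_sigma_finite ps_D)
  have 1: "integrable (?D \<Otimes>\<^sub>M ?D) (\<lambda>p. (fst p)^2)"
    apply (subst integrable_distr_eq[symmetric, where N="?D" and g=fst and f="\<lambda>x. x^2"])
      apply measurable
    apply (subst prob_space.distr_pair_fst[OF ps_D])
    by (rule int_D_sq)
  have 2: "integrable (?D \<Otimes>\<^sub>M ?D) (\<lambda>p. (snd p)^2)"
    apply (subst integrable_product_swap_iff[symmetric])
    using 1 by (simp add: split_beta')
  have "integrable (?D \<Otimes>\<^sub>M ?D) (\<lambda>p. (cmod ((\<lambda>(x, y). Complex x y) p))^2)"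
    using Bochner_Integration.integrable_add[OF 1 2]
    by (simp add: case_prod_beta cmod_def)
  then show ?thesis
    unfolding cgauss_def
    by (subst integrable_distr_eq) auto
qed

lemma ps_Pi: "prob_space (PiM {..<N} (\<lambda>_. cgauss))"
  by (rule prob_space_PiM) (rule ps_cgauss)

lemma ps_ch: "prob_space (channel_space N)"
  unfolding channel_space_def by (intro prob_space_pair ps_Pi ps_cgauss)

lemma int_ch_sq:
  assumes "N \<ge> 1"
  shows "integrable (channel_space N) (\<lambda>w. (cmod (fst w 0))^2)"
proof -
  have "integrable (PiM {..<N} (\<lambda>_. cgauss)) (\<lambda>g. (cmod (g 0))^2)"
    apply (subst integrable_distr_eq[symmetric, where N="cgauss" and g="\<lambda>g. g 0" and f="\<lambda>z. (cmod z)^2"])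
      apply (rule measurable_component_singleton) using assms apply simp
     apply measurable
    apply (subst distr_PiM_component)
    using assms ps_cgauss int_cgauss_sq by auto
  then show ?thesis
    unfolding channel_space_def
    apply (subst integrable_distr_eq[symmetric, where N="PiM {..<N} (\<lambda>_. cgauss)" and g=fst and f="\<lambda>g. (cmod (g 0))^2"])
      apply measurable
    using assms apply simp
    apply (subst prob_space.distr_pair_fst[OF ps_cgauss])
    by simp
qed

lemma sets_ch[measurable_cong]: "sets (channel_space N) = sets (PiM {..<N} (\<lambda>_. cgauss) \<Otimes>\<^sub>M cgauss)"
  unfolding channel_space_def ..

lemma meas_F: "(\<lambda>w. log 2 (1 + gammaS N \<eta> \<theta> \<rho> d1 d2 \<tau> lam sig (fst w) (snd w)))
   \<in> borel_measurable (channel_space N)"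
proof -
  have [measurable]: "(\<lambda>w. fst w i) \<in> borel_measurable (channel_space N)" for i
  proof (cases "i < N")
    case True then show ?thesis by (measurable; simp)
  next
    case False
    have "(\<lambda>w. fst w i) \<in> space (channel_space N) \<rightarrow> {undefined}"
      using False by (auto simp: channel_space_def space_pair_measure space_PiM PiE_def extensional_def)
    then have "\<forall>w\<in>space (channel_space N). fst w i = undefined" by auto
    then show ?thesis
      by (subst measurable_cong[where g="\<lambda>_. undefined"]) auto
  qed
  show ?thesis
    unfolding gammaS_def Let_def by measurable
qed

definition Gm :: "real \<Rightarrow> real \<Rightarrow> real \<Rightarrow> real \<Rightarrow> real \<Rightarrow> real \<Rightarrow> real" where
  "Gm A B C s a b = A * s * a * b / (B * s * b + C * a + 1)"

lemma Gm_nonneg: "A \<ge> 0 \<Longrightarrow> B \<ge> 0 \<Longrightarrow> C \<ge> 0 \<Longrightarrow> s \<ge> 0 \<Longrightarrow> a \<ge> 0 \<Longrightarrow> b \<ge> 0 \<Longrightarrow> Gm A B C s a b \<ge> 0"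
  unfolding Gm_def by simp

lemma Gm_le: assumes "A > 0" "B > 0" "C > 0" "s \<ge> 0" "a \<ge> 0" "b \<ge> 0"
  shows "Gm A B C s a b \<le> A / B * a"
proof (cases "s * b = 0")
  case True then show ?thesis using assms unfolding Gm_def by auto
next
  case False
  then have sb: "s*b > 0" using assms by (simp add: less_le)
  have "Gm A B C s a b = (A*a) * (s*b) / (B*(s*b) + (C*a + 1))" unfolding Gm_def by (simp add: ac_simps)
  also have "\<dots> \<le> (A*a) * (s*b) / (B*(s*b))"
        apply (rule divide_left_mono)
    using assms sb by (auto intro!: mult_pos_pos add_pos_pos add_nonneg_pos)
  also have "\<dots> = A / B * a"
  proof -
    have "s \<noteq> 0" "b \<noteq> 0" using sb by auto
    then show ?thesis using assms by (simp add: field_simps)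
  qed
  finally show ?thesis .
qed

lemma Gm_mono_b: assumes "A > 0" "B > 0" "C > 0" "s \<ge> 0" "a \<ge> 0" "0 \<le> b1" "b1 \<le> b2"
  shows "Gm A B C s a b1 \<le> Gm A B C s a b2"
proof -
  define K where "K = A* s*a"
  define L where "L = B* s"
  define c where "c = C*a + 1"
  have K: "K \<ge> 0" "L \<ge> 0" "c > 0" using assms by (auto simp: K_def L_def c_def intro: add_nonneg_pos)
  have "K*b1/(L*b1+c) \<le> K*b2/(L*b2+c)"
  proof -
    have "K*b1*(L*b2+c) \<le> K*b2*(L*b1+c)"
    proof -
      have "K*b1*(L*b2+c) = K*L*b1*b2 + K*c*b1" by (simp add: algebra_simps)
      also have "\<dots> \<le> K*L*b1*b2 + K*c*b2" using K assms by (simp add: mult_left_mono)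
      also have "\<dots> = K*b2*(L*b1+c)" by (simp add: algebra_simps)
      finally show ?thesis .
    qed
    moreover have "L*b1+c > 0" "L*b2+c > 0" using K assms by (auto intro: add_nonneg_pos)
    ultimately show ?thesis by (simp add: divide_simps)
  qed
  then show ?thesis unfolding Gm_def K_def L_def c_def by (simp add: ac_simps)
qed

lemma frac_concave:
  fixes K L c s1 s2 t :: real
  assumes "K \<ge> 0" "L \<ge> 0" "c > 0" "s1 \<ge> 0" "s2 \<ge> 0" "0 \<le> t" "t \<le> 1"
  shows "(1-t) * (K * s1/(L * s1+c)) + t * (K * s2/(L * s2+c)) \<le> K*((1-t) * s1+t * s2)/(L*((1-t) * s1+t * s2)+c)"
proof -
  define s where "s = (1-t) * s1+t * s2"
  define u1 where "u1 = L * s1+c"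
  define u2 where "u2 = L * s2+c"
  define u where "u = L * s+c"
  have s: "s \<ge> 0" using assms by (simp add: s_def)
  have u1: "u1 > 0" and u2: "u2 > 0" and u: "u>0" using assms s by (auto intro: add_nonneg_pos simp: u1_def u2_def u_def)
  have poly: "K * s*u1*u2 - ((1-t)*K * s1*u2*u + t*K * s2*u1*u) = K*c*t*(1-t)*L*(s1-s2)^2"
    unfolding u1_def u2_def u_def s_def power2_eq_square by algebra
  have "K*c*t*(1-t)*L*(s1-s2)^2 \<ge> 0" using assms by simp
  then have ineq: "(1-t)*K * s1*u2*u + t*K * s2*u1*u \<le> K * s*u1*u2" using poly by linarith
  have "(1-t) * (K * s1/u1) + t * (K * s2/u2) = ((1-t)*K * s1*u2 + t*K * s2*u1)/(u1*u2)"
    using u1 u2 by (simp add: field_simps)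
  also have "\<dots> \<le> K * s/u"
    using u1 u2 u ineq by (simp add: divide_simps) (simp add: algebra_simps)
  finally show ?thesis unfolding u1_def u2_def u_def s_def .
qed

definition cA :: "real \<Rightarrow> real \<Rightarrow> real \<Rightarrow> real \<Rightarrow> real \<Rightarrow> real \<Rightarrow> real" where
  "cA \<eta> \<theta> \<rho> d1 d2 \<tau> = \<eta> * \<theta> * (1 - \<theta>) * \<rho>\<^sup>2 / (d1 powr (2 * \<tau>) * d2 powr \<tau>)"
definition cB :: "real \<Rightarrow> real \<Rightarrow> real \<Rightarrow> real \<Rightarrow> real \<Rightarrow> real \<Rightarrow> real" where
  "cB \<eta> \<theta> \<rho> d1 d2 \<tau> = \<eta> * \<theta> * \<rho> / (d1 powr \<tau> * d2 powr \<tau>)"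
definition cC :: "real \<Rightarrow> real \<Rightarrow> real \<Rightarrow> real \<Rightarrow> real" where
  "cC \<theta> \<rho> d1 \<tau> = (1 - \<theta>) * \<rho> / d1 powr \<tau>"

lemma gammaS_eq: "gammaS N \<eta> \<theta> \<rho> d1 d2 \<tau> lam sig g q =
   Gm (cA \<eta> \<theta> \<rho> d1 d2 \<tau>) (cB \<eta> \<theta> \<rho> d1 d2 \<tau>) (cC \<theta> \<rho> d1 \<tau>)
      (\<Sum>i<N. lam ! i * (cmod (g i))\<^sup>2) (lam ! 0 * (cmod (g 0))\<^sup>2) (sig ! 0 * (cmod q)\<^sup>2)"
  by (simp add: gammaS_def Gm_def Let_def cA_def cB_def cC_def)

lemma log_Gm_concave:
  assumes "A > 0" "B > 0" "C > 0" "s1 \<ge> 0" "s2 \<ge> 0" "a \<ge> 0" "b \<ge> 0" "0 \<le> t" "t \<le> 1"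
  shows "(1-t) * log 2 (1 + Gm A B C s1 a b) + t * log 2 (1 + Gm A B C s2 a b)
     \<le> log 2 (1 + Gm A B C ((1-t) * s1 + t * s2) a b)"
proof -
  have G: "Gm A B C x a b = (A*a*b) * x / ((B*b) * x + (C*a+1))" for x
    unfolding Gm_def by (simp add: ac_simps)
  have c: "C*a+1 > 0" using assms by (simp add: add_nonneg_pos)
  have fc: "(1-t) * Gm A B C s1 a b + t * Gm A B C s2 a b \<le> Gm A B C ((1-t) * s1 + t * s2) a b"
    unfolding G using frac_concave[of "A*a*b" "B*b" "C*a+1" s1 s2 t] assms c by simp
  have g1: "Gm A B C s1 a b \<ge> 0" "Gm A B C s2 a b \<ge> 0"
    using assms by (auto intro!: Gm_nonneg)
  have lnc: "(1-t) * ln (1 + Gm A B C s1 a b) + t * ln (1 + Gm A B C s2 a b)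
       \<le> ln ((1-t) *\<^sub>R (1 + Gm A B C s1 a b) + t *\<^sub>R (1 + Gm A B C s2 a b))"
    by (rule concave_onD[OF ln_concave]) (use assms g1 in auto)
  also have "\<dots> \<le> ln (1 + Gm A B C ((1-t) * s1 + t * s2) a b)"
  proof (rule ln_mono)
    show "0 < (1-t) *\<^sub>R (1 + Gm A B C s1 a b) + t *\<^sub>R (1 + Gm A B C s2 a b)"
    proof -
      have "(1-t) * Gm A B C s1 a b \<ge> 0" "t * Gm A B C s2 a b \<ge> 0" using assms g1 by auto
      then show ?thesis unfolding real_scaleR_def using assms by (simp add: algebra_simps)
    qed
    show "(1-t) *\<^sub>R (1 + Gm A B C s1 a b) + t *\<^sub>R (1 + Gm A B C s2 a b) \<le> 1 + Gm A B C ((1-t) * s1 + t * s2) a b"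
      using fc by (simp add: algebra_simps)
  qed
  finally have "(1-t) * ln (1 + Gm A B C s1 a b) + t * ln (1 + Gm A B C s2 a b) \<le> ln (1 + Gm A B C ((1-t) * s1 + t * s2) a b)" .
  then have "((1-t) * ln (1 + Gm A B C s1 a b) + t * ln (1 + Gm A B C s2 a b)) / ln 2 \<le> ln (1 + Gm A B C ((1-t) * s1 + t * s2) a b) / ln 2"
    by (simp add: divide_right_mono)
  then show ?thesis by (simp add: log_def add_divide_distrib)
qed

lemma consts_pos:
  assumes "0 < \<eta>" "0 < \<theta>" "\<theta> < 1" "\<rho> > 0" "d1 > 0" "d2 > 0"
  shows "cA \<eta> \<theta> \<rho> d1 d2 \<tau> > 0" "cB \<eta> \<theta> \<rho> d1 d2 \<tau> > 0" "cC \<theta> \<rho> d1 \<tau> > 0"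
  using assms by (auto simp: cA_def cB_def cC_def)

lemma int_F:
  assumes "0 < \<eta>" "0 < \<theta>" "\<theta> < 1" "\<rho> > 0" "d1 > 0" "d2 > 0" "N \<ge> 1"
    and lam: "\<forall>i<N. lam ! i \<ge> 0" and sig: "sig ! 0 \<ge> 0"
  shows "integrable (channel_space N) (\<lambda>w. log 2 (1 + gammaS N \<eta> \<theta> \<rho> d1 d2 \<tau> lam sig (fst w) (snd w)))"
proof -
  let ?A = "cA \<eta> \<theta> \<rho> d1 d2 \<tau>" and ?B = "cB \<eta> \<theta> \<rho> d1 d2 \<tau>" and ?C = "cC \<theta> \<rho> d1 \<tau>"
  have pos: "?A > 0" "?B > 0" "?C > 0" using consts_pos assms by auto
  have i1: "integrable (channel_space N) (\<lambda>w. (?A / ?B * lam ! 0 / ln 2) * (cmod (fst w 0))^2)"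
    using int_ch_sq[OF assms(7)] by simp
  have m1: "(\<lambda>w. log 2 (1 + gammaS N \<eta> \<theta> \<rho> d1 d2 \<tau> lam sig (fst w) (snd w))) \<in> borel_measurable (channel_space N)"
    by (rule meas_F)
  have ae: "AE w in channel_space N. norm (log 2 (1 + gammaS N \<eta> \<theta> \<rho> d1 d2 \<tau> lam sig (fst w) (snd w)))
      \<le> norm ((?A / ?B * lam ! 0 / ln 2) * (cmod (fst w 0))^2)"
  proof (rule AE_I2)
    fix w :: "(nat \<Rightarrow> complex) \<times> complex"
    define S where "S = (\<Sum>i<N. lam ! i * (cmod (fst w i))\<^sup>2)"
    define a where "a = lam ! 0 * (cmod (fst w 0))\<^sup>2"
    define b where "b = sig ! 0 * (cmod (snd w))\<^sup>2"
    have l0: "lam ! 0 \<ge> 0" using lam assms(7) by auto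
    have Sa: "S \<ge> 0" "a \<ge> 0" "b \<ge> 0" using lam sig l0 unfolding S_def a_def b_def by (auto intro!: sum_nonneg)
    have G0: "Gm ?A ?B ?C S a b \<ge> 0" using Gm_nonneg pos Sa by (simp add: less_imp_le)
    have G1: "Gm ?A ?B ?C S a b \<le> ?A / ?B * a" using Gm_le pos Sa by simp
    have "log 2 (1 + Gm ?A ?B ?C S a b) \<ge> 0" using G0 by simp
    moreover have "log 2 (1 + Gm ?A ?B ?C S a b) \<le> Gm ?A ?B ?C S a b / ln 2"
      unfolding log_def by (rule divide_right_mono) (use G0 ln_add_one_self_le_self in auto)
    moreover have "Gm ?A ?B ?C S a b / ln 2 \<le> (?A / ?B * a) / ln 2"
      using divide_right_mono[OF G1, of "ln 2"] by simp
    ultimately show "norm (log 2 (1 + gammaS N \<eta> \<theta> \<rho> d1 d2 \<tau> lam sig (fst w) (snd w)))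
      \<le> norm ((?A / ?B * lam ! 0 / ln 2) * (cmod (fst w 0))^2)"
      unfolding gammaS_eq S_def[symmetric] a_def[symmetric] b_def[symmetric]
      using pos l0 by (simp add: a_def)
  qed
  show ?thesis by (rule Bochner_Integration.integrable_bound[OF i1 m1 ae])
qed



definition pp :: "nat \<Rightarrow> nat \<Rightarrow> nat \<Rightarrow> nat" where
  "pp j k i = (if i = j then k else if i = k then j else i)"

lemma pp_inv[simp]: "pp j k (pp j k i) = i" unfolding pp_def by auto

lemma pp_lt: "j < N \<Longrightarrow> k < N \<Longrightarrow> i < N \<Longrightarrow> pp j k i < N" unfolding pp_def by auto

lemma meas_T:
  assumes "j < N" "k < N"
  shows "(\<lambda>w. ((\<lambda>n\<in>{..<N}. fst w (pp j k n)), snd w)) \<in> measurable (channel_space N) (channel_space N)"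
proof -
  have [measurable]: "(\<lambda>w. fst w (pp j k n)) \<in> measurable (channel_space N) cgauss" if "n \<in> {..<N}" for n
    apply measurable
    using pp_lt[OF assms, of n] that by auto
  show ?thesis
    unfolding channel_space_def
    apply (rule measurable_Pair)
     apply (rule measurable_restrict)
     apply (simp add: channel_space_def[symmetric])
    by measurable
qed

lemma distr_T:
  assumes "j < N" "k < N"
  shows "distr (channel_space N) (channel_space N) (\<lambda>w. ((\<lambda>n\<in>{..<N}. fst w (pp j k n)), snd w)) = channel_space N"
proof -
  let ?P = "PiM {..<N} (\<lambda>_. cgauss)"
  have R: "distr ?P ?P (\<lambda>\<omega>. \<lambda>n\<in>{..<N}. \<omega> (pp j k n)) = ?P"
    using distr_PiM_reindex[of "{..<N}" "\<lambda>_. cgauss" "pp j k" "{..<N}"] ps_cgauss pp_lt[OF assms]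
    by (auto simp: inj_on_def) (metis pp_inv)
  have mT: "(\<lambda>\<omega>. \<lambda>n\<in>{..<N}. \<omega> (pp j k n)) \<in> measurable ?P ?P"
    using pp_lt[OF assms] by (intro measurable_restrict) (measurable; simp)
  have "distr ?P ?P (\<lambda>\<omega>. \<lambda>n\<in>{..<N}. \<omega> (pp j k n)) \<Otimes>\<^sub>M distr cgauss cgauss (\<lambda>x. x)
     = distr (?P \<Otimes>\<^sub>M cgauss) (?P \<Otimes>\<^sub>M cgauss) (\<lambda>(x, y). ((\<lambda>n\<in>{..<N}. x (pp j k n)), y))"
    apply (rule pair_measure_distr[OF mT])
     apply simp
    using prob_space_imp_sigma_finite[OF ps_cgauss] by simp
  then show ?thesis
    unfolding channel_space_def R distr_id by (simp add: split_beta')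
qed



lemma gammaS_swap:
  assumes "length lam = N" "0 < j" "j < N" "0 < k" "k < N"
  shows "gammaS N \<eta> \<theta> \<rho> d1 d2 \<tau> lam sig (\<lambda>n\<in>{..<N}. g (pp j k n)) q
       = gammaS N \<eta> \<theta> \<rho> d1 d2 \<tau> (lam[j := lam!k, k := lam!j]) sig g q"
proof -
  let ?l = "lam[j := lam!k, k := lam!j]"
  have l: "?l ! i = lam ! (pp j k i)" if "i < N" for i
    using that assms by (auto simp: pp_def nth_list_update)
  have S: "(\<Sum>i<N. lam ! i * (cmod ((\<lambda>n\<in>{..<N}. g (pp j k n)) i))\<^sup>2)
      = (\<Sum>i<N. ?l ! i * (cmod (g i))\<^sup>2)"
  proof -
    have "(\<Sum>i<N. lam ! i * (cmod ((\<lambda>n\<in>{..<N}. g (pp j k n)) i))\<^sup>2)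
        = (\<Sum>i<N. lam ! i * (cmod (g (pp j k i)))\<^sup>2)" by simp
    also have "\<dots> = (\<Sum>i<N. lam ! (pp j k i) * (cmod (g i))\<^sup>2)"
      by (rule sum.reindex_bij_witness[of _ "pp j k" "pp j k"]) (use pp_lt assms in auto)
    also have "\<dots> = (\<Sum>i<N. ?l ! i * (cmod (g i))\<^sup>2)"
      using l by simp
    finally show ?thesis .
  qed
  have z: "pp j k 0 = 0" using assms by (simp add: pp_def)
  have l0: "?l ! 0 = lam ! 0" using l[of 0] z assms by simp
  show ?thesis unfolding gammaS_eq S l0 using assms z by simp
qed

lemma CS_swap:
  assumes "length lam = N" "0 < j" "j < N" "0 < k" "k < N"
  shows "CS N \<eta> \<theta> \<rho> d1 d2 \<tau> (lam[j := lam!k, k := lam!j]) sig = CS N \<eta> \<theta> \<rho> d1 d2 \<tau> lam sig"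
proof -
  let ?T = "\<lambda>w. ((\<lambda>n\<in>{..<N}. fst w (pp j k n)), snd w)"
  let ?F = "\<lambda>l w. log 2 (1 + gammaS N \<eta> \<theta> \<rho> d1 d2 \<tau> l sig (fst w) (snd w))"
  have "(\<integral>w. ?F lam w \<partial>channel_space N) = (\<integral>w. ?F lam w \<partial>distr (channel_space N) (channel_space N) ?T)"
    using distr_T assms by simp
  also have "\<dots> = (\<integral>w. ?F lam (?T w) \<partial>channel_space N)"
    by (rule integral_distr[OF meas_T meas_F]) (use assms in auto)
  also have "\<dots> = (\<integral>w. ?F (lam[j := lam!k, k := lam!j]) w \<partial>channel_space N)"
    using gammaS_swap[OF assms] by simp
  finally show ?thesis unfolding CS_def by simp
qed

lemma CS_concave:
  assumes "0 < \<eta>" "0 < \<theta>" "\<theta> < 1" "\<rho> > 0" "d1 > 0" "d2 > 0" "N \<ge> 1"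
    and x: "length x = N" "\<forall>i<N. x ! i \<ge> 0" and z: "length z = N" "\<forall>i<N. z ! i \<ge> 0"
    and x0: "x ! 0 = z ! 0" and sig: "sig ! 0 \<ge> 0" and t: "0 \<le> t" "t \<le> 1"
  shows "(1-t) * CS N \<eta> \<theta> \<rho> d1 d2 \<tau> x sig + t * CS N \<eta> \<theta> \<rho> d1 d2 \<tau> z sig
     \<le> CS N \<eta> \<theta> \<rho> d1 d2 \<tau> (map (\<lambda>i. (1-t) * x!i + t * z!i) [0..<N]) sig"
proof -
  let ?y = "map (\<lambda>i. (1-t) * x!i + t * z!i) [0..<N]"
  let ?F = "\<lambda>l w. log 2 (1 + gammaS N \<eta> \<theta> \<rho> d1 d2 \<tau> l sig (fst w) (snd w))"
  let ?A = "cA \<eta> \<theta> \<rho> d1 d2 \<tau>" and ?B = "cB \<eta> \<theta> \<rho> d1 d2 \<tau>" and ?C = "cC \<theta> \<rho> d1 \<tau>"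
  have pos: "?A > 0" "?B > 0" "?C > 0" using consts_pos[OF assms(1-6)] by auto
  have ynn: "\<forall>i<N. ?y ! i \<ge> 0" using x z t by auto
  have iy: "integrable (channel_space N) (?F ?y)" using int_F[OF assms(1-7) ynn sig] .
  have ix: "integrable (channel_space N) (?F x)" using int_F[OF assms(1-7) x(2) sig] .
  have iz: "integrable (channel_space N) (?F z)" using int_F[OF assms(1-7) z(2) sig] .
  have pw: "(1-t) * ?F x w + t * ?F z w \<le> ?F ?y w" for w
  proof -
    define Sx where "Sx = (\<Sum>i<N. x ! i * (cmod (fst w i))\<^sup>2)"
    define Sz where "Sz = (\<Sum>i<N. z ! i * (cmod (fst w i))\<^sup>2)"
    define a where "a = x ! 0 * (cmod (fst w 0))\<^sup>2"
    define b where "b = sig ! 0 * (cmod (snd w))\<^sup>2"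
    have Sy: "(\<Sum>i<N. ?y ! i * (cmod (fst w i))\<^sup>2) = (1-t) * Sx + t * Sz"
      unfolding Sx_def Sz_def by (simp add: sum_distrib_left sum.distrib[symmetric] algebra_simps)
    have y0: "?y ! 0 = x ! 0" using assms x0 by (simp add: algebra_simps)
    have nn: "Sx \<ge> 0" "Sz \<ge> 0" "a \<ge> 0" "b \<ge> 0"
      using x z sig assms(7) unfolding Sx_def Sz_def a_def b_def by (auto intro!: sum_nonneg)
    show ?thesis
      unfolding gammaS_eq Sy y0 Sx_def[symmetric] Sz_def[symmetric] a_def[symmetric] b_def[symmetric]
      unfolding x0[symmetric] a_def[symmetric]
      using log_Gm_concave[OF pos nn t] by simp
  qed
  have "(1-t) * CS N \<eta> \<theta> \<rho> d1 d2 \<tau> x sig + t * CS N \<eta> \<theta> \<rho> d1 d2 \<tau> z sig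
      = (1/2) * (\<integral>w. (1-t) * ?F x w + t * ?F z w \<partial>channel_space N)"
  proof -
    have "(\<integral>w. (1-t) * ?F x w + t * ?F z w \<partial>channel_space N)
        = (\<integral>w. (1-t) * ?F x w \<partial>channel_space N) + (\<integral>w. t * ?F z w \<partial>channel_space N)"
      by (rule Bochner_Integration.integral_add[OF integrable_mult_right[OF ix] integrable_mult_right[OF iz]])
    also have "\<dots> = (1-t) * (\<integral>w. ?F x w \<partial>channel_space N) + t * (\<integral>w. ?F z w \<partial>channel_space N)"
      by simp
    finally have eq: "(\<integral>w. (1-t) * ?F x w + t * ?F z w \<partial>channel_space N)
       = (1-t) * (\<integral>w. ?F x w \<partial>channel_space N) + t * (\<integral>w. ?F z w \<partial>channel_space N)" .
    show ?thesis unfolding CS_def eq by (simp add: field_simps)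
  qed
  also have "\<dots> \<le> (1/2) * (\<integral>w. ?F ?y w \<partial>channel_space N)"
    using integral_mono[OF _ iy pw] ix iz by simp
  finally show ?thesis unfolding CS_def .
qed

lemma CS_mono_sig:
  assumes "0 < \<eta>" "0 < \<theta>" "\<theta> < 1" "\<rho> > 0" "d1 > 0" "d2 > 0" "N \<ge> 1"
    and lam: "\<forall>i<N. lam ! i \<ge> 0" and sig: "0 \<le> sig2 ! 0" "sig2 ! 0 \<le> sig1 ! 0"
  shows "CS N \<eta> \<theta> \<rho> d1 d2 \<tau> lam sig2 \<le> CS N \<eta> \<theta> \<rho> d1 d2 \<tau> lam sig1"
proof -
  let ?F = "\<lambda>s w. log 2 (1 + gammaS N \<eta> \<theta> \<rho> d1 d2 \<tau> lam s (fst w) (snd w))"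
  let ?A = "cA \<eta> \<theta> \<rho> d1 d2 \<tau>" and ?B = "cB \<eta> \<theta> \<rho> d1 d2 \<tau>" and ?C = "cC \<theta> \<rho> d1 \<tau>"
  have pos: "?A > 0" "?B > 0" "?C > 0" using consts_pos[OF assms(1-6)] by auto
  have i1: "integrable (channel_space N) (?F sig1)" using int_F[OF assms(1-7) lam] sig by simp
  have i2: "integrable (channel_space N) (?F sig2)" using int_F[OF assms(1-7) lam] sig by simp
  have pw: "?F sig2 w \<le> ?F sig1 w" for w
  proof -
    define S where "S = (\<Sum>i<N. lam ! i * (cmod (fst w i))\<^sup>2)"
    define a where "a = lam ! 0 * (cmod (fst w 0))\<^sup>2"
    have nn: "S \<ge> 0" "a \<ge> 0" using lam assms(7) unfolding S_def a_def by (auto intro!: sum_nonneg)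
    have b: "0 \<le> sig2 ! 0 * (cmod (snd w))\<^sup>2" "sig2 ! 0 * (cmod (snd w))\<^sup>2 \<le> sig1 ! 0 * (cmod (snd w))\<^sup>2"
      using sig by (auto intro: mult_right_mono)
    have m: "Gm ?A ?B ?C S a (sig2 ! 0 * (cmod (snd w))\<^sup>2) \<le> Gm ?A ?B ?C S a (sig1 ! 0 * (cmod (snd w))\<^sup>2)"
      by (rule Gm_mono_b[OF pos nn b])
    have g0: "Gm ?A ?B ?C S a (sig2 ! 0 * (cmod (snd w))\<^sup>2) \<ge> 0"
      using Gm_nonneg pos nn b by (simp add: less_imp_le)
    show ?thesis unfolding gammaS_eq S_def[symmetric] a_def[symmetric]
      using m g0 by simp
  qed
  show ?thesis unfolding CS_def using integral_mono[OF i2 i1 pw] by simp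
qed


lemma sum_delta_lt: "(\<Sum>i<(m::nat). if i = j then c else (0::real)) = (if j < m then c else 0)"
  by (induction m) auto

lemma schur:
  fixes \<phi> :: "real list \<Rightarrow> real" and y :: "real list" and N :: nat
  assumes ylen: "length y = N" and ypos: "\<forall>i<N. y!i > 0"
    and ysort: "\<forall>i j. i \<le> j \<longrightarrow> j < N \<longrightarrow> y!j \<le> y!i"
    and sym: "\<And>x j k. length x = N \<Longrightarrow> \<forall>i<N. x!i > 0 \<Longrightarrow> 0 < j \<Longrightarrow> j < N \<Longrightarrow> 0 < k \<Longrightarrow> k < N
                \<Longrightarrow> \<phi> (x[j := x!k, k := x!j]) = \<phi> x"
    and conc: "\<And>x z t. length x = N \<Longrightarrow> length z = N \<Longrightarrow> \<forall>i<N. x!i > 0 \<Longrightarrow> \<forall>i<N. z!i > 0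
                \<Longrightarrow> x!0 = z!0 \<Longrightarrow> 0 \<le> t \<Longrightarrow> t \<le> 1
                \<Longrightarrow> (1-t) * \<phi> x + t * \<phi> z \<le> \<phi> (map (\<lambda>i. (1-t) * x!i + t * z!i) [0..<N])"
  shows "length x = N \<Longrightarrow> \<forall>i<N. x!i > 0 \<Longrightarrow> x!0 = y!0
     \<Longrightarrow> (\<forall>m\<le>N. (\<Sum>i<m. y!i) \<le> (\<Sum>i<m. x!i)) \<Longrightarrow> (\<Sum>i<N. x!i) = (\<Sum>i<N. y!i) \<Longrightarrow> \<phi> x \<le> \<phi> y"
proof (induction "card {i. i<N \<and> x!i \<noteq> y!i}" arbitrary: x rule: less_induct)
  case less
  note xlen = less.prems(1) and xpos = less.prems(2) and x0 = less.prems(3)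
    and part = less.prems(4) and tot = less.prems(5)
  show ?case
  proof (cases "x = y")
    case True then show ?thesis by simp
  next
    case False
    then obtain i0 where i0: "i0 < N" "x!i0 \<noteq> y!i0"
      using nth_equalityI[of x y] ylen xlen by auto
    have ex_gt: "\<exists>i<N. x!i > y!i"
    proof (rule ccontr)
      assume "\<not> ?thesis"
      then have le: "\<forall>i<N. x!i \<le> y!i" by auto
      then have "x!i0 < y!i0" using i0 by force
      then have "(\<Sum>i<N. x!i) < (\<Sum>i<N. y!i)"
        using le i0 by (intro sum_strict_mono_ex1) auto
      then show False using tot by simp
    qed
    define J where "J = {i. i<N \<and> x!i > y!i}"
    define j where "j = Max J"
    have finJ: "finite J" "J \<noteq> {}" using ex_gt unfolding J_def by auto
    have jJ: "j \<in> J" unfolding j_def using finJ by (rule Max_in)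
    have jN: "j < N" and xyj: "x!j > y!j" using jJ unfolding J_def by auto
    have jmax: "x!i \<le> y!i" if "j < i" "i < N" for i
    proof (rule ccontr)
      assume "\<not> x!i \<le> y!i"
      then have "i \<in> J" unfolding J_def using that by auto
      then have "i \<le> j" unfolding j_def using finJ by simp
      then show False using that by simp
    qed
    have j0: "j \<noteq> 0"
    proof
      assume "j = 0" then show False using xyj x0 by simp
    qed
    have sj: "(\<Sum>i<Suc j. y!i) < (\<Sum>i<Suc j. x!i)"
      using part[rule_format, of j] jN xyj by simp
    have ex_lt: "\<exists>i. j < i \<and> i < N \<and> x!i < y!i"
    proof (rule ccontr)
      assume "\<not> ?thesis"
      then have eq: "x!i = y!i" if "j < i" "i < N" for i using jmax[OF that] that by force
      have split: "(\<Sum>i<N. f i) = (\<Sum>i<Suc j. f i) + (\<Sum>i\<in>{Suc j..<N}. f i)" for f :: "nat \<Rightarrow> real"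
      proof -
        have e: "{..<N} = {..<Suc j} \<union> {Suc j..<N}" using jN by auto
        show ?thesis unfolding e by (rule sum.union_disjoint) auto
      qed
      have "(\<Sum>i\<in>{Suc j..<N}. x!i) = (\<Sum>i\<in>{Suc j..<N}. y!i)"
        using eq by (intro sum.cong) auto
      then have "(\<Sum>i<N. y!i) < (\<Sum>i<N. x!i)" using split[of "\<lambda>i. x!i"] split[of "\<lambda>i. y!i"] sj by simp
      then show False using tot by simp
    qed
    define K where "K = {i. j < i \<and> i < N \<and> x!i < y!i}"
    define k where "k = Min K"
    have finK: "finite K" "K \<noteq> {}" using ex_lt unfolding K_def by auto
    have kK: "k \<in> K" unfolding k_def using finK by (rule Min_in)
    have jk: "j < k" and kN: "k < N" and xyk: "x!k < y!k" using kK unfolding K_def by auto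
    have kmin: "x!i = y!i" if "j < i" "i < k" for i
    proof -
      have "i \<notin> K"
      proof
        assume "i \<in> K" then have "k \<le> i" unfolding k_def using finK by simp
        then show False using that by simp
      qed
      then have "\<not> x!i < y!i" using that kN unfolding K_def by auto
      then show ?thesis using jmax[of i] that kN by force
    qed
    define \<delta> where "\<delta> = min (x!j - y!j) (y!k - x!k)"
    have dpos: "\<delta> > 0" using xyj xyk unfolding \<delta>_def by simp
    have d1: "\<delta> \<le> x!j - y!j" and d2: "\<delta> \<le> y!k - x!k" unfolding \<delta>_def by auto
    define x' where "x' = x[j := x!j - \<delta>, k := x!k + \<delta>]"
    have x'len: "length x' = N" using xlen unfolding x'_def by simp
    have x'nth: "x'!i = x!i + ((if i = j then - \<delta> else 0) + (if i = k then \<delta> else 0))" if "i < N" for i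
      using that jk xlen jN kN unfolding x'_def by (auto simp: nth_list_update)
    have x'pos: "\<forall>i<N. x'!i > 0"
    proof (intro allI impI)
      fix i assume i: "i < N"
      show "x'!i > 0"
      proof (cases "i = j")
        case True then show ?thesis using x'nth[OF i] jk d1 ypos jN by force
      next
        case False
        then show ?thesis using x'nth[OF i] xpos i dpos by (cases "i = k") auto
      qed
    qed
    have x'0: "x'!0 = y!0" using x'nth[of 0] j0 jk x0 jN by simp
    have sumx': "(\<Sum>i<m. x'!i) = (\<Sum>i<m. x!i) + ((if j < m then - \<delta> else 0) + (if k < m then \<delta> else 0))"
      if "m \<le> N" for m
    proof -
      have "(\<Sum>i<m. x'!i) = (\<Sum>i<m. x!i + ((if i = j then - \<delta> else 0) + (if i = k then \<delta> else 0)))"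
        using x'nth that by (intro sum.cong) auto
      also have "\<dots> = (\<Sum>i<m. x!i) + ((if j < m then - \<delta> else 0) + (if k < m then \<delta> else 0))"
        by (simp add: sum.distrib sum_delta_lt)
      finally show ?thesis .
    qed
    have part': "\<forall>m\<le>N. (\<Sum>i<m. y!i) \<le> (\<Sum>i<m. x'!i)"
    proof (intro allI impI)
      fix m assume m: "m \<le> N"
      show "(\<Sum>i<m. y!i) \<le> (\<Sum>i<m. x'!i)"
      proof (cases "j < m \<and> m \<le> k")
        case False
        then have "(\<Sum>i<m. x'!i) = (\<Sum>i<m. x!i)" using sumx'[OF m] jk by auto
        then show ?thesis using part m by simp
      next
        case True
        have split: "(\<Sum>i<m. f i) = (\<Sum>i<Suc j. f i) + (\<Sum>i\<in>{Suc j..<m}. f i)" for f :: "nat \<Rightarrow> real"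
        proof -
          have e: "{..<m} = {..<Suc j} \<union> {Suc j..<m}" using True by auto
          show ?thesis unfolding e by (rule sum.union_disjoint) auto
        qed
        have "(\<Sum>i\<in>{Suc j..<m}. x!i) = (\<Sum>i\<in>{Suc j..<m}. y!i)"
          using kmin True by (intro sum.cong) auto
        moreover have "(\<Sum>i<j. y!i) \<le> (\<Sum>i<j. x!i)" using part jN by simp
        ultimately have "(\<Sum>i<m. y!i) + (x!j - y!j) \<le> (\<Sum>i<m. x!i)"
          using split[of "\<lambda>i. x!i"] split[of "\<lambda>i. y!i"] by simp
        moreover have "(\<Sum>i<m. x'!i) = (\<Sum>i<m. x!i) - \<delta>" using sumx'[OF m] True by simp
        ultimately show ?thesis using d1 by simp
      qed
    qed
    have tot': "(\<Sum>i<N. x'!i) = (\<Sum>i<N. y!i)" using sumx'[of N] jN kN tot by simp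
    have sub: "{i. i<N \<and> x'!i \<noteq> y!i} \<subset> {i. i<N \<and> x!i \<noteq> y!i}"
    proof
      show "{i. i<N \<and> x'!i \<noteq> y!i} \<subseteq> {i. i<N \<and> x!i \<noteq> y!i}"
      proof clarify
        fix i assume i: "i < N" "x'!i \<noteq> y!i" "x!i = y!i"
        then have "i = j \<or> i = k" using x'nth[OF i(1)] by (auto split: if_splits)
        then show False using i xyj xyk by auto
      qed
      show "{i. i<N \<and> x'!i \<noteq> y!i} \<noteq> {i. i<N \<and> x!i \<noteq> y!i}"
      proof (cases "\<delta> = x!j - y!j")
        case True
        have "x'!j = y!j" using x'nth[OF jN] jk True by simp
        then show ?thesis using jN xyj by (metis (mono_tags, lifting) less_irrefl mem_Collect_eq)
      next
        case False
        then have "\<delta> = y!k - x!k" unfolding \<delta>_def by (simp add: min_def split: if_splits)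
        then have "x'!k = y!k" using x'nth[OF kN] jk by simp
        then show ?thesis using kN xyk by (metis (mono_tags, lifting) less_irrefl mem_Collect_eq)
      qed
    qed
    have lt: "card {i. i<N \<and> x'!i \<noteq> y!i} < card {i. i<N \<and> x!i \<noteq> y!i}"
      by (rule psubset_card_mono[OF _ sub]) simp
    have IH: "\<phi> x' \<le> \<phi> y"
      using less.hyps[OF lt x'len x'pos x'0 part' tot'] .
    define z where "z = x[j := x!k, k := x!j]"
    have zlen: "length z = N" using xlen unfolding z_def by simp
    have znth: "z!i = (if i = j then x!k else if i = k then x!j else x!i)" if "i < N" for i
      using that jk xlen jN kN unfolding z_def by (auto simp: nth_list_update)
    have zpos: "\<forall>i<N. z!i > 0" using znth xpos jN kN by auto
    have z0: "x!0 = z!0" using znth[of 0] j0 jk jN by simp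
    have ykj: "y!k \<le> y!j" using ysort jk kN by simp
    have gap: "x!j - x!k > 0" using xyj xyk ykj by simp
    define t where "t = \<delta> / (x!j - x!k)"
    have t0: "0 \<le> t" using dpos gap unfolding t_def by simp
    have t1: "t \<le> 1" using d1 xyk ykj gap unfolding t_def by (simp add: divide_le_eq)
    have td: "t * (x!j - x!k) = \<delta>" using gap unfolding t_def by simp
    have "(1-t) * \<phi> x + t * \<phi> z \<le> \<phi> (map (\<lambda>i. (1-t) * x!i + t * z!i) [0..<N])"
      by (rule conc[OF xlen zlen xpos zpos z0 t0 t1])
    moreover have "\<phi> z = \<phi> x" unfolding z_def using sym[OF xlen xpos] j0 jN jk kN by simp
    moreover have "map (\<lambda>i. (1-t) * x!i + t * z!i) [0..<N] = x'"
    proof (rule nth_equalityI)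
      show "length (map (\<lambda>i. (1-t) * x!i + t * z!i) [0..<N]) = length x'" using x'len by simp
      fix i assume "i < length (map (\<lambda>i. (1-t) * x!i + t * z!i) [0..<N])"
      then have i: "i < N" by simp
      show "map (\<lambda>i. (1-t) * x!i + t * z!i) [0..<N] ! i = x' ! i"
        using i znth[OF i] x'nth[OF i] jk td by (auto simp: algebra_simps)
    qed
    ultimately have "\<phi> x \<le> \<phi> x'" by (simp add: algebra_simps)
    then show ?thesis using IH by simp
  qed
qed

lemma rev_sort_id: "sorted_wrt (\<ge>) (l::real list) \<Longrightarrow> rev (sort l) = l"
proof -
  assume h: "sorted_wrt (\<ge>) l"
  have "sorted (rev l)" using h by (simp add: sorted_wrt_rev)
  then have "sort l = rev l" by (intro properties_for_sort) auto
  then show ?thesis by simp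
qed

lemma sl_take: "k \<le> length a \<Longrightarrow> sum_list (take k a) = (\<Sum>i<k. (a::real list)!i)"
  by (simp add: sum_list_sum_nth atLeast0LessThan min_def)

lemma maj_partial:
  assumes "eigvec N a" "eigvec N b" "majorizes a b"
  shows "\<forall>m\<le>N. (\<Sum>i<m. b!i) \<le> (\<Sum>i<m. a!i)" "(\<Sum>i<N. a!i) = (\<Sum>i<N. b!i)"
proof -
  have la: "length a = N" "rev (sort a) = a" using assms(1) rev_sort_id unfolding eigvec_def by auto
  have lb: "length b = N" "rev (sort b) = b" using assms(2) rev_sort_id unfolding eigvec_def by auto
  have tot: "(\<Sum>i<N. a!i) = (\<Sum>i<N. b!i)"
    using assms(3) la lb sl_take[of N a] sl_take[of N b] unfolding majorizes_def by simp
  then show "(\<Sum>i<N. a!i) = (\<Sum>i<N. b!i)" .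
  show "\<forall>m\<le>N. (\<Sum>i<m. b!i) \<le> (\<Sum>i<m. a!i)"
  proof (intro allI impI)
    fix m assume m: "m \<le> N"
    show "(\<Sum>i<m. b!i) \<le> (\<Sum>i<m. a!i)"
    proof (cases "m = 0 \<or> m = N")
      case True then show ?thesis using tot by auto
    next
      case False
      then have "m \<in> {1..<length a}" using m la by auto
      then have "sum_list (take m (rev (sort b))) \<le> sum_list (take m (rev (sort a)))"
        using assms(3) unfolding majorizes_def by blast
      then show ?thesis using la lb sl_take[of m a] sl_take[of m b] m by simp
    qed
  qed
qed

lemma eig_pos: "eigvec N a \<Longrightarrow> \<forall>i<N. a!i > 0"
  unfolding eigvec_def by (auto simp: nth_mem)

lemma eig_sorted: "eigvec N a \<Longrightarrow> \<forall>i j. i \<le> j \<longrightarrow> j < N \<longrightarrow> a!j \<le> a!i"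
  unfolding eigvec_def
  by (metis le_less order_refl sorted_wrt_iff_nth_less)

theorem proposition3:
  fixes N :: nat and \<eta> \<theta> \<rho> d1 d2 \<tau> :: real
  assumes "N \<ge> 1" and "0 < \<eta>" and "\<eta> \<le> 1" and "0 < \<theta>" and "\<theta> < 1"
    and "\<rho> > 0" and "d1 > 0" and "d2 > 0" and "\<tau> > 0"
  shows "(\<forall>lam sig1 sig2. eigvec N lam \<and> eigvec N sig1 \<and> eigvec N sig2 \<and> majorizes sig1 sig2
            \<longrightarrow> CS N \<eta> \<theta> \<rho> d1 d2 \<tau> lam sig1 \<ge> CS N \<eta> \<theta> \<rho> d1 d2 \<tau> lam sig2)
       \<and> (\<forall>sig lam1 lam2. eigvec N sig \<and> eigvec N lam1 \<and> eigvec N lam2 \<and> majorizes lam1 lam2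
            \<and> lam1 ! 0 = lam2 ! 0
            \<longrightarrow> CS N \<eta> \<theta> \<rho> d1 d2 \<tau> lam1 sig \<le> CS N \<eta> \<theta> \<rho> d1 d2 \<tau> lam2 sig)"
proof -
  note P = assms(2) assms(4) assms(5) assms(6) assms(7) assms(8) assms(1)
  have p1: "\<forall>lam sig1 sig2. eigvec N lam \<and> eigvec N sig1 \<and> eigvec N sig2 \<and> majorizes sig1 sig2
            \<longrightarrow> CS N \<eta> \<theta> \<rho> d1 d2 \<tau> lam sig1 \<ge> CS N \<eta> \<theta> \<rho> d1 d2 \<tau> lam sig2"
  proof (intro allI impI)
    fix lam sig1 sig2 assume h: "eigvec N lam \<and> eigvec N sig1 \<and> eigvec N sig2 \<and> majorizes sig1 sig2"
    have "(\<Sum>i<1. sig2!i) \<le> (\<Sum>i<1. sig1!i)" using maj_partial(1)[of N sig1 sig2] h assms(1) by blast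
    then have s: "sig2!0 \<le> sig1!0" by simp
    have s0: "0 \<le> sig2!0" using eig_pos[of N sig2] h assms(1) by force
    have l: "\<forall>i<N. lam!i \<ge> 0" using eig_pos[of N lam] h by (auto simp: less_imp_le)
    show "CS N \<eta> \<theta> \<rho> d1 d2 \<tau> lam sig1 \<ge> CS N \<eta> \<theta> \<rho> d1 d2 \<tau> lam sig2"
      by (rule CS_mono_sig[OF P l s0 s])
  qed
  have p2: "\<forall>sig lam1 lam2. eigvec N sig \<and> eigvec N lam1 \<and> eigvec N lam2 \<and> majorizes lam1 lam2
            \<and> lam1 ! 0 = lam2 ! 0
            \<longrightarrow> CS N \<eta> \<theta> \<rho> d1 d2 \<tau> lam1 sig \<le> CS N \<eta> \<theta> \<rho> d1 d2 \<tau> lam2 sig"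
  proof (intro allI impI)
    fix sig lam1 lam2 assume h: "eigvec N sig \<and> eigvec N lam1 \<and> eigvec N lam2 \<and> majorizes lam1 lam2
            \<and> lam1 ! 0 = lam2 ! 0"
    have s0: "0 \<le> sig!0" using eig_pos[of N sig] h assms(1) by force
    have len: "length lam1 = N" "length lam2 = N" using h unfolding eigvec_def by auto
    show "CS N \<eta> \<theta> \<rho> d1 d2 \<tau> lam1 sig \<le> CS N \<eta> \<theta> \<rho> d1 d2 \<tau> lam2 sig"
    proof (rule schur[where \<phi>="\<lambda>l. CS N \<eta> \<theta> \<rho> d1 d2 \<tau> l sig" and y=lam2 and N=N])
      show "length lam2 = N" by (rule len(2))
      show "\<forall>i<N. lam2!i > 0" using eig_pos h by blast
      show "\<forall>i j. i \<le> j \<longrightarrow> j < N \<longrightarrow> lam2!j \<le> lam2!i" using eig_sorted h by blast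
      show "CS N \<eta> \<theta> \<rho> d1 d2 \<tau> (x[j := x!k, k := x!j]) sig = CS N \<eta> \<theta> \<rho> d1 d2 \<tau> x sig"
        if "length x = N" "0 < j" "j < N" "0 < k" "k < N" for x j k
        by (rule CS_swap[OF that])
      show "(1-t) * CS N \<eta> \<theta> \<rho> d1 d2 \<tau> x sig + t * CS N \<eta> \<theta> \<rho> d1 d2 \<tau> z sig
          \<le> CS N \<eta> \<theta> \<rho> d1 d2 \<tau> (map (\<lambda>i. (1-t) * x!i + t * z!i) [0..<N]) sig"
        if "length x = N" "length z = N" "\<forall>i<N. x!i > 0" "\<forall>i<N. z!i > 0" "x!0 = z!0" "0 \<le> t" "t \<le> 1"
        for x z t
        using that by (intro CS_concave[OF P]) (auto simp: less_imp_le s0)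
      show "length lam1 = N" by (rule len(1))
      show "\<forall>i<N. lam1!i > 0" using eig_pos h by blast
      show "lam1!0 = lam2!0" using h by blast
      show "\<forall>m\<le>N. (\<Sum>i<m. lam2!i) \<le> (\<Sum>i<m. lam1!i)" using maj_partial(1)[of N lam1 lam2] h by blast
      show "(\<Sum>i<N. lam1!i) = (\<Sum>i<N. lam2!i)" using maj_partial(2)[of N lam1 lam2] h by blast
    qed
  qed
  show ?thesis using p1 p2 by blast
qed


end
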